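(* Consider a congestion game in which each $\mathcal{A}_i$ is the set of all $k$-subsets of $\mathcal{F}$ and which admits a strict Nash equilibrium $a^*$ (with $\omega_i^*$ the point mass on $a_i^*$). Let $\epsilon>0$ and $U_\epsilon$ be as in Lemma 1, and let $M\ge|\log(\epsilon/(2kF))|$ be such that $U_M\subseteq U_\epsilon$. Suppose every player runs CongestEXP with expected-reward feedback and learning rate $\eta$, with initial values $\tilde y_i^0$ chosen so that $\omega^0\in U_M$. Then for every $i\in[n]$ and every $t$, \[ \|\omega_i^t-\omega_i^*\|_1\le 2kF\exp(-M-\eta\epsilon t). \]
   Context: Congestion game: $n$ players, facility set $\mathcal{F}$ with $F$ facilities, facility rewards $r^f\in[0,1]$ depending on a joint action only through the load of $f$; $r_i(a)=\sum_{f\in a_i}r^f(a)$, extended to mixed strategies by expectation under independent sampling. Strict Nash equilibrium: pure $a^*$ with $r_i(a_i^*,a_{-i}^* )>r_i(a_i,a_{-i}^* )$ for all $i$, $a_i\ne a_i^*$. Lemma 1: there are $\epsilon>0$ and a neighborhood $U_\epsilon$ of $a^*$ in joint mixed strategy space with $r_i(a_i^*,\tilde\omega_{-i})-r_i(a_i,\tilde\omega_{-i})\ge\epsilon$ for all $\tilde\omega\in U_\epsilon$, all $i$, $a_i\ne a_i^*$. CongestEXP with expected-reward feedback (player $i$, learning rate $\eta$): initial reals $\tilde y_i^0(f)$; at round $t\ge1$, $\tilde y_i^t(f)=\mathbb{E}_{a_{-i}\sim\omega_{-i}^t}[r^f(a_i,a_{-i})]$ for any $a_i\ni f$. Strategies: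 $\omega_i^t(a)\propto\prod_{f\in a}\exp(\eta\sum_{j=0}^{t}\tilde y_i^j(f))$ over $a\in\mathcal{A}_i$ (indexing so that $\omega^0$ is determined by $\tilde y^0$). Define $\tilde z_i^t(a_i)=\eta\sum_{j=0}^t(\sum_{f\in a_i}\tilde y_i^j(f)-\sum_{f\in a_i^*}\tilde y_i^j(f))$ and $U_M=\{\omega^t:\tilde z_i^t(a_i)\le -M\ \forall i,\ \forall a_i\ne a_i^*\}$. *)

theory Defs
  imports "HOL-Analysis.Analysis"
begin

text \<open>Players are 0,...,n-1; facilities form a finite set F; R f l in [0,1] is the
reward of facility f when its load is l.\<close>

definition actions :: "'f set \<Rightarrow> nat \<Rightarrow> 'f set set" where
  "actions F k = {a. a \<subseteq> F \<and> card a = k}"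

definition load :: "nat \<Rightarrow> 'f \<Rightarrow> (nat \<Rightarrow> 'f set) \<Rightarrow> nat" where
  "load n f a = card {j \<in> {..<n}. f \<in> a j}"

definition fac_reward :: "('f \<Rightarrow> nat \<Rightarrow> real) \<Rightarrow> nat \<Rightarrow> 'f \<Rightarrow> (nat \<Rightarrow> 'f set) \<Rightarrow> real" where
  "fac_reward R n f a = R f (load n f a)"

definition pure_reward :: "('f \<Rightarrow> nat \<Rightarrow> real) \<Rightarrow> nat \<Rightarrow> nat \<Rightarrow> (nat \<Rightarrow> 'f set) \<Rightarrow> real" where
  "pure_reward R n i a = (\<Sum>f\<in>a i. fac_reward R n f a)"

definition others :: "nat \<Rightarrow> nat \<Rightarrow> nat set" where
  "others n i = {..<n} - {i}"

definition dev_reward ::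
  "nat \<Rightarrow> 'f set \<Rightarrow> nat \<Rightarrow> ('f \<Rightarrow> nat \<Rightarrow> real) \<Rightarrow> nat \<Rightarrow> 'f set \<Rightarrow> (nat \<Rightarrow> 'f set \<Rightarrow> real) \<Rightarrow> real" where
  "dev_reward n F k R i b w =
     (\<Sum>a\<in>PiE (others n i) (\<lambda>_. actions F k).
        (\<Prod>j\<in>others n i. w j (a j)) * pure_reward R n i (a(i := b)))"

text \<open>Expected-reward feedback: E_{a_{-i} ~ w_{-i}} [r^f(a_i, a_{-i})] for any a_i containing f,
i.e. R f evaluated at load 1 + #{j /= i. f in a_j}.\<close>
definition feedback ::
  "nat \<Rightarrow> 'f set \<Rightarrow> nat \<Rightarrow> ('f \<Rightarrow> nat \<Rightarrow> real) \<Rightarrow> (nat \<Rightarrow> 'f set \<Rightarrow> real) \<Rightarrow> nat \<Rightarrow> 'f \<Rightarrow> real" where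
  "feedback n F k R w i f =
     (\<Sum>a\<in>PiE (others n i) (\<lambda>_. actions F k).
        (\<Prod>j\<in>others n i. w j (a j)) * R f (Suc (card {j \<in> others n i. f \<in> a j})))"

definition is_mixed :: "'f set \<Rightarrow> nat \<Rightarrow> ('f set \<Rightarrow> real) \<Rightarrow> bool" where
  "is_mixed F k s \<longleftrightarrow> (\<forall>a. 0 \<le> s a) \<and> (\<forall>a. a \<notin> actions F k \<longrightarrow> s a = 0)
      \<and> (\<Sum>a\<in>actions F k. s a) = 1"

definition mixed_profiles :: "nat \<Rightarrow> 'f set \<Rightarrow> nat \<Rightarrow> (nat \<Rightarrow> 'f set \<Rightarrow> real) set" where
  "mixed_profiles n F k = {w. \<forall>i<n. is_mixed F k (w i)}"

definition strict_NE ::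
  "nat \<Rightarrow> 'f set \<Rightarrow> nat \<Rightarrow> ('f \<Rightarrow> nat \<Rightarrow> real) \<Rightarrow> (nat \<Rightarrow> 'f set) \<Rightarrow> bool" where
  "strict_NE n F k R astar \<longleftrightarrow> (\<forall>i<n. astar i \<in> actions F k) \<and>
     (\<forall>i<n. \<forall>b\<in>actions F k. b \<noteq> astar i \<longrightarrow>
        pure_reward R n i (astar(i := b)) < pure_reward R n i astar)"

definition point_mass :: "(nat \<Rightarrow> 'f set) \<Rightarrow> nat \<Rightarrow> 'f set \<Rightarrow> real" where
  "point_mass astar i a = (if a = astar i then 1 else 0)"

definition softmax :: "'f set \<Rightarrow> nat \<Rightarrow> (nat \<Rightarrow> 'f \<Rightarrow> real) \<Rightarrow> nat \<Rightarrow> 'f set \<Rightarrow> real" where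
  "softmax F k Y i a = (if a \<in> actions F k
      then (\<Prod>f\<in>a. exp (Y i f)) / (\<Sum>b\<in>actions F k. \<Prod>f\<in>b. exp (Y i f)) else 0)"

definition U_M :: "nat \<Rightarrow> 'f set \<Rightarrow> nat \<Rightarrow> (nat \<Rightarrow> 'f set) \<Rightarrow> real \<Rightarrow> (nat \<Rightarrow> 'f set \<Rightarrow> real) set" where
  "U_M n F k astar M = {softmax F k Y | Y. \<forall>i<n. \<forall>a\<in>actions F k. a \<noteq> astar i \<longrightarrow>
      (\<Sum>f\<in>a. Y i f) - (\<Sum>f\<in>astar i. Y i f) \<le> - M}"

text \<open>Cumulative scores eta * sum_{j=0}^t y_i^j(f) of CongestEXP with expected-reward
feedback, where y^{t+1} is computed from the strategy profile w^t.\<close>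
fun cum_score ::
  "nat \<Rightarrow> 'f set \<Rightarrow> nat \<Rightarrow> ('f \<Rightarrow> nat \<Rightarrow> real) \<Rightarrow> real \<Rightarrow> (nat \<Rightarrow> 'f \<Rightarrow> real) \<Rightarrow> nat \<Rightarrow> nat \<Rightarrow> 'f \<Rightarrow> real" where
  "cum_score n F k R eta y0 0 = (\<lambda>i f. eta * y0 i f)"
| "cum_score n F k R eta y0 (Suc t) = (\<lambda>i f. cum_score n F k R eta y0 t i f
      + eta * feedback n F k R (softmax F k (cum_score n F k R eta y0 t)) i f)"

definition congestexp ::
  "nat \<Rightarrow> 'f set \<Rightarrow> nat \<Rightarrow> ('f \<Rightarrow> nat \<Rightarrow> real) \<Rightarrow> real \<Rightarrow> (nat \<Rightarrow> 'f \<Rightarrow> real) \<Rightarrow> nat \<Rightarrow> nat \<Rightarrow> 'f set \<Rightarrow> real" where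
  "congestexp n F k R eta y0 t = softmax F k (cum_score n F k R eta y0 t)"

end

theory Submission
  imports Defs
begin

lemma actions_fin: "finite F \<Longrightarrow> finite (actions F k)"
  unfolding actions_def by (rule finite_subset[of _ "Pow F"]) auto

lemma actions_mem_fin: "finite F \<Longrightarrow> a \<in> actions F k \<Longrightarrow> finite a"
  unfolding actions_def by (auto intro: finite_subset)

lemma feedback_sum:
  assumes "i < n"
  shows "(\<Sum>f\<in>b. feedback n F k R w i f) = dev_reward n F k R i b w"
proof -
  have L: "load n f (a(i := b)) = Suc (card {j \<in> others n i. f \<in> a j})" if "f \<in> b" for f a
  proof -
    have "{j \<in> {..<n}. f \<in> (a(i := b)) j} = insert i {j \<in> others n i. f \<in> a j}"
      using that assms by (auto simp: others_def)
    moreover have "finite {j \<in> others n i. f \<in> a j}" by (simp add: others_def)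
    moreover have "i \<notin> {j \<in> others n i. f \<in> a j}" by (simp add: others_def)
    ultimately show ?thesis unfolding load_def by simp
  qed
  show ?thesis
    unfolding feedback_def dev_reward_def pure_reward_def fac_reward_def
    by (subst sum.swap) (simp add: sum_distrib_left L)
qed

lemma softmax_ratio:
  assumes "finite F" "a \<in> actions F k" "a0 \<in> actions F k"
  shows "softmax F k Y i a / softmax F k Y i a0 = exp ((\<Sum>f\<in>a. Y i f) - (\<Sum>f\<in>a0. Y i f))"
proof -
  let ?W = "\<lambda>b. \<Prod>f\<in>b. exp (Y i f)"
  have Zpos: "(\<Sum>b\<in>actions F k. ?W b) > 0"
    using assms by (intro sum_pos2[where i=a0]) (auto simp: actions_fin prod_pos prod_nonneg)
  have "?W a = exp (\<Sum>f\<in>a. Y i f)" "?W a0 = exp (\<Sum>f\<in>a0. Y i f)"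
    using assms by (simp_all add: exp_sum actions_mem_fin)
  then show ?thesis using assms Zpos by (simp add: softmax_def exp_diff)
qed

lemma softmax_eq_gap:
  assumes "finite F" "a \<in> actions F k" "a0 \<in> actions F k" "softmax F k Y1 = softmax F k Y2"
  shows "(\<Sum>f\<in>a. Y1 i f) - (\<Sum>f\<in>a0. Y1 i f) = (\<Sum>f\<in>a. Y2 i f) - (\<Sum>f\<in>a0. Y2 i f)"
  using softmax_ratio[OF assms(1-3), of Y1 i] softmax_ratio[OF assms(1-3), of Y2 i] assms(4)
  by simp


lemma swap_gap:
  fixes Y :: "nat \<Rightarrow> 'f \<Rightarrow> real"
  assumes finF: "finite F" and a0: "a0 \<in> actions F k"
    and gap: "\<forall>a\<in>actions F k. a \<noteq> a0 \<longrightarrow> (\<Sum>f\<in>a. Y i f) - (\<Sum>f\<in>a0. Y i f) \<le> c"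
    and f: "f \<in> a0" and g: "g \<in> F" "g \<notin> a0"
  shows "Y i g - Y i f \<le> c"
proof -
  have fa0: "finite a0" using actions_mem_fin[OF finF a0] .
  define a where "a = insert g (a0 - {f})"
  have "card a = k" using a0 fa0 f g unfolding a_def actions_def
    by (simp add: card_Diff_singleton) (metis One_nat_def Suc_pred card_gt_0_iff empty_iff)
  then have "a \<in> actions F k" using a0 g unfolding a_def actions_def by auto
  moreover have "a \<noteq> a0" using g unfolding a_def by auto
  ultimately have le: "(\<Sum>h\<in>a. Y i h) - (\<Sum>h\<in>a0. Y i h) \<le> c" using gap by blast
  have e1: "(\<Sum>h\<in>a. Y i h) = Y i g + (\<Sum>h\<in>a0 - {f}. Y i h)"
    unfolding a_def using fa0 g by (simp add: sum.insert)
  have e2: "(\<Sum>h\<in>a0. Y i h) = Y i f + (\<Sum>h\<in>a0 - {f}. Y i h)"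
    using fa0 f by (simp add: sum.remove)
  show ?thesis using le unfolding e1 e2 by simp
qed


lemma sm_bound:
  fixes Y :: "nat \<Rightarrow> 'f \<Rightarrow> real"
  assumes finF: "finite F" and a0: "a0 \<in> actions F k"
    and gap: "\<forall>a\<in>actions F k. a \<noteq> a0 \<longrightarrow> (\<Sum>f\<in>a. Y i f) - (\<Sum>f\<in>a0. Y i f) \<le> c"
  shows "(\<Sum>a\<in>actions F k. \<bar>softmax F k Y i a - (if a = a0 then 1 else 0)\<bar>)
           \<le> 2 * real k * real (card F) * exp c"
proof -
  define A where "A = actions F k"
  define W where "W b = (\<Prod>f\<in>b. exp (Y i f))" for b
  define Z where "Z = sum W A"
  have finA: "finite A" unfolding A_def using actions_fin[OF finF] .
  have a0A: "a0 \<in> A" using a0 A_def by simp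
  have Wpos: "W b > 0" for b unfolding W_def by (simp add: prod_pos)
  have Zpos: "Z > 0" unfolding Z_def using finA a0A Wpos
    by (intro sum_pos2[where i=a0]) (auto intro: less_imp_le)
  have sm: "softmax F k Y i a = W a / Z" if "a \<in> A" for a
    using that unfolding softmax_def W_def Z_def A_def by simp
  have fa0: "finite a0" using actions_mem_fin[OF finF a0] .
  have ca0: "card a0 = k" "a0 \<subseteq> F" using a0 unfolding actions_def by auto
  have S1: "(\<Sum>a\<in>A. \<bar>softmax F k Y i a - (if a = a0 then 1 else 0)\<bar>) = 2 * ((\<Sum>a\<in>A-{a0}. W a) / Z)"
  proof -
    have tot: "sum W A = W a0 + (\<Sum>a\<in>A-{a0}. W a)" using finA a0A by (simp add: sum.remove)
    have "(\<Sum>a\<in>A. \<bar>softmax F k Y i a - (if a = a0 then 1 else 0)\<bar>)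
        = \<bar>W a0 / Z - 1\<bar> + (\<Sum>a\<in>A-{a0}. \<bar>W a / Z\<bar>)"
      using finA a0A by (simp add: sum.remove sm)
    also have "(\<Sum>a\<in>A-{a0}. \<bar>W a / Z\<bar>) = (\<Sum>a\<in>A-{a0}. W a) / Z"
      using Wpos Zpos by (simp add: sum_divide_distrib less_imp_le)
    also have "\<bar>W a0 / Z - 1\<bar> = (\<Sum>a\<in>A-{a0}. W a) / Z"
    proof -
      have "W a0 / Z - 1 = - ((\<Sum>a\<in>A-{a0}. W a) / Z)" using Zpos tot unfolding Z_def
        by (simp add: field_simps)
      moreover have "(\<Sum>a\<in>A-{a0}. W a) / Z \<ge> 0" using Wpos Zpos
        by (simp add: sum_nonneg less_imp_le)
      ultimately show ?thesis by (metis abs_minus_cancel abs_of_nonneg)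
    qed
    finally show ?thesis by simp
  qed
  have S3: "(\<Sum>a\<in>{a\<in>A. f \<notin> a}. W a) \<le> real (card (F - a0)) * (exp c * Z)" if f: "f \<in> a0" for f
  proof -
    have "(\<Sum>a\<in>{a\<in>A. f \<notin> a}. W a) \<le> (\<Sum>a\<in>{a\<in>A. f \<notin> a}. \<Sum>g\<in>F - a0. if g \<in> a then W a else 0)"
    proof (rule sum_mono)
      fix a assume a: "a \<in> {a\<in>A. f \<notin> a}"
      then have aF: "a \<subseteq> F" "card a = k" unfolding A_def actions_def by auto
      have "\<not> a \<subseteq> a0"
      proof
        assume "a \<subseteq> a0"
        then have "a = a0" using card_subset_eq[OF fa0] aF ca0 by simp
        then show False using a f by auto
      qed
      then obtain g where g: "g \<in> a" "g \<notin> a0" by auto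
      then have gF: "g \<in> F - a0" using aF by auto
      have "W a = (if g \<in> a then W a else 0)" using g by simp
      also have "\<dots> \<le> (\<Sum>g\<in>F - a0. if g \<in> a then W a else 0)"
        by (rule member_le_sum[OF gF]) (auto simp: less_imp_le Wpos finF)
      finally show "W a \<le> \<dots>" .
    qed
    also have "\<dots> = (\<Sum>g\<in>F - a0. \<Sum>a\<in>{a\<in>A. f \<notin> a}. if g \<in> a then W a else 0)"
      by (rule sum.swap)
    also have "\<dots> \<le> (\<Sum>g\<in>F - a0. exp c * Z)"
    proof (rule sum_mono)
      fix g assume g: "g \<in> F - a0"
      have fg: "f \<noteq> g" using f g by auto
      define S where "S = {a\<in>A. f \<notin> a \<and> g \<in> a}"
      define phi where "phi a = insert f (a - {g})" for a
      have "(\<Sum>a\<in>{a\<in>A. f \<notin> a}. if g \<in> a then W a else 0) = (\<Sum>a\<in>S. W a)"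
        unfolding S_def using finA by (auto simp: sum.inter_filter intro!: sum.cong)
      also have "\<dots> \<le> (\<Sum>a\<in>S. exp c * W (phi a))"
      proof (rule sum_mono)
        fix a assume a: "a \<in> S"
        have fina: "finite a" using a unfolding S_def A_def using actions_mem_fin[OF finF] by auto
        have "W a = exp (Y i g) * (\<Prod>h\<in>a-{g}. exp (Y i h))"
          unfolding W_def using prod.remove[OF fina, of g "\<lambda>h. exp (Y i h)"] a unfolding S_def by simp
        moreover have "W (phi a) = exp (Y i f) * (\<Prod>h\<in>a-{g}. exp (Y i h))"
          unfolding W_def phi_def using a fina unfolding S_def by (simp add: prod.insert)
        moreover have "Y i g - Y i f \<le> c" using swap_gap[of F a0 k Y i c f g, OF finF a0 gap f] g by auto
        then have "exp (Y i g) \<le> exp c * exp (Y i f)" by (simp add: exp_add[symmetric])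
        ultimately show "W a \<le> exp c * W (phi a)"
          by (simp add: mult.assoc[symmetric] mult_right_mono prod_nonneg)
      qed
      also have "\<dots> = exp c * (\<Sum>b\<in>phi ` S. W b)"
      proof -
        have "inj_on phi S"
        proof (rule inj_onI)
          fix a b assume ab: "a \<in> S" "b \<in> S" "phi a = phi b"
          have "a = insert g (phi a - {f})" using ab(1) fg unfolding S_def phi_def by auto
          moreover have "b = insert g (phi b - {f})" using ab(2) fg unfolding S_def phi_def by auto
          ultimately show "a = b" using ab(3) by simp
        qed
        then show ?thesis by (simp add: sum.reindex sum_distrib_left)
      qed
      also have "\<dots> \<le> exp c * Z"
      proof -
        have "phi ` S \<subseteq> A"
        proof
          fix b assume "b \<in> phi ` S"
          then obtain a where a: "a \<in> S" "b = phi a" by auto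
          have fina: "finite a" using a unfolding S_def A_def using actions_mem_fin[OF finF] by auto
          have aa: "a \<subseteq> F" "card a = k" "f \<notin> a" "g \<in> a" using a unfolding S_def A_def actions_def by auto
          have "card b = k" using aa fina a(2) unfolding phi_def
            by (simp add: card_insert_if card_Diff_singleton)
              (metis One_nat_def Suc_pred card_gt_0_iff empty_iff)
          moreover have "b \<subseteq> F" using aa a(2) f ca0 unfolding phi_def by auto
          ultimately show "b \<in> A" unfolding A_def actions_def by auto
        qed
        then have "(\<Sum>b\<in>phi ` S. W b) \<le> Z" unfolding Z_def
          by (intro sum_mono2[OF finA]) (auto simp: less_imp_le Wpos)
        then show ?thesis by simp
      qed
      finally show "(\<Sum>a\<in>{a\<in>A. f \<notin> a}. if g \<in> a then W a else 0) \<le> exp c * Z" .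
    qed
    also have "\<dots> = real (card (F - a0)) * (exp c * Z)" by simp
    finally show ?thesis .
  qed
  have S2: "(\<Sum>a\<in>A-{a0}. W a) \<le> (\<Sum>f\<in>a0. \<Sum>a\<in>{a\<in>A. f \<notin> a}. W a)"
  proof -
    have "(\<Sum>a\<in>A-{a0}. W a) \<le> (\<Sum>a\<in>A-{a0}. \<Sum>f\<in>a0. if f \<notin> a then W a else 0)"
    proof (rule sum_mono)
      fix a assume a: "a \<in> A - {a0}"
      then have aF: "card a = k" "finite a" unfolding A_def actions_def using finF
        by (auto intro: finite_subset)
      have "\<not> a0 \<subseteq> a"
      proof
        assume "a0 \<subseteq> a"
        then have "a0 = a" using card_subset_eq[OF aF(2)] aF ca0 by simp
        then show False using a by auto
      qed
      then obtain f where f: "f \<in> a0" "f \<notin> a" by auto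
      have "W a = (if f \<notin> a then W a else 0)" using f by simp
      also have "\<dots> \<le> (\<Sum>f\<in>a0. if f \<notin> a then W a else 0)"
        by (rule member_le_sum[OF f(1)]) (auto simp: less_imp_le Wpos fa0)
      finally show "W a \<le> \<dots>" .
    qed
    also have "\<dots> = (\<Sum>f\<in>a0. \<Sum>a\<in>A-{a0}. if f \<notin> a then W a else 0)"
      by (rule sum.swap)
    also have "\<dots> \<le> (\<Sum>f\<in>a0. \<Sum>a\<in>A. if f \<notin> a then W a else 0)"
      by (intro sum_mono sum_mono2) (auto simp: finA less_imp_le Wpos)
    also have "\<dots> = (\<Sum>f\<in>a0. \<Sum>a\<in>{a\<in>A. f \<notin> a}. W a)"
      using finA by (simp add: sum.inter_filter)
    finally show ?thesis .
  qed
  have "(\<Sum>a\<in>A-{a0}. W a) \<le> (\<Sum>f\<in>a0. real (card (F - a0)) * (exp c * Z))"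
    using S2 S3 sum_mono[of a0 "\<lambda>f. \<Sum>a\<in>{a\<in>A. f \<notin> a}. W a"] by (meson order_trans)
  also have "\<dots> = real k * real (card (F - a0)) * (exp c * Z)" using ca0 by simp
  also have "\<dots> \<le> real k * real (card F) * (exp c * Z)"
    using Zpos finF by (intro mult_right_mono mult_left_mono) (auto intro: card_mono)
  finally have "(\<Sum>a\<in>A-{a0}. W a) / Z \<le> real k * real (card F) * exp c"
    using Zpos by (simp add: divide_le_eq mult.assoc)
  then show ?thesis using S1 unfolding A_def by simp
qed

theorem theorem2:
  fixes n k :: nat and F :: "'f set" and R :: "'f \<Rightarrow> nat \<Rightarrow> real"
    and astar :: "nat \<Rightarrow> 'f set" and eps M eta :: real
    and Ueps :: "(nat \<Rightarrow> 'f set \<Rightarrow> real) set" and y0 :: "nat \<Rightarrow> 'f \<Rightarrow> real"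
  assumes finF: "finite F"
    and Rrange: "\<forall>f\<in>F. \<forall>l. 0 \<le> R f l \<and> R f l \<le> 1"
    and NE: "strict_NE n F k R astar"
    and eps_pos: "eps > 0"
    and Ueps_sub: "Ueps \<subseteq> mixed_profiles n F k"
    and Ueps_gap: "\<forall>w\<in>Ueps. \<forall>i<n. \<forall>b\<in>actions F k. b \<noteq> astar i \<longrightarrow>
                     dev_reward n F k R i (astar i) w - dev_reward n F k R i b w \<ge> eps"
    and M_ge: "M \<ge> \<bar>ln (eps / (2 * real k * real (card F)))\<bar>"
    and UM_sub: "U_M n F k astar M \<subseteq> Ueps"
    and eta_pos: "eta > 0"
    and init: "congestexp n F k R eta y0 0 \<in> U_M n F k astar M"
  shows "\<forall>i<n. \<forall>t::nat.
           (\<Sum>a\<in>actions F k. \<bar>congestexp n F k R eta y0 t i a - point_mass astar i a\<bar>)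
             \<le> 2 * real k * real (card F) * exp (- M - eta * eps * real t)"
  proof -
  define C where "C t = cum_score n F k R eta y0 t" for t
  define A where "A = actions F k"
  have astarA: "astar i \<in> A" if "i < n" for i using NE that unfolding strict_NE_def A_def by auto
  have sumC: "(\<Sum>f\<in>b. C (Suc t) i f) = (\<Sum>f\<in>b. C t i f) + eta * dev_reward n F k R i b (softmax F k (C t))"
    if "i < n" for b t i
    using feedback_sum[OF that, where b=b and F=F and k=k and R=R and w="softmax F k (C t)"]
    by (simp add: C_def sum.distrib sum_distrib_left[symmetric])
  have inv: "\<forall>i<n. \<forall>a\<in>A. a \<noteq> astar i \<longrightarrow>
      (\<Sum>f\<in>a. C t i f) - (\<Sum>f\<in>astar i. C t i f) \<le> - M - eta * eps * real t" for t
  proof (induction t)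
    case 0
    from init obtain Y where Yeq: "softmax F k (C 0) = softmax F k Y"
      and gapY: "\<forall>i<n. \<forall>a\<in>actions F k. a \<noteq> astar i \<longrightarrow>
      (\<Sum>f\<in>a. Y i f) - (\<Sum>f\<in>astar i. Y i f) \<le> - M"
      unfolding U_M_def congestexp_def C_def by blast
    show ?case
    proof (intro allI impI ballI)
      fix i a assume i: "i < n" and a: "a \<in> A" "a \<noteq> astar i"
      have "(\<Sum>f\<in>a. C 0 i f) - (\<Sum>f\<in>astar i. C 0 i f) = (\<Sum>f\<in>a. Y i f) - (\<Sum>f\<in>astar i. Y i f)"
        using softmax_eq_gap[OF finF _ _ Yeq] a astarA[OF i] unfolding A_def by blast
      then show "(\<Sum>f\<in>a. C 0 i f) - (\<Sum>f\<in>astar i. C 0 i f) \<le> - M - eta * eps * real 0"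
        using gapY i a unfolding A_def by simp
    qed
  next
    case (Suc t)
    have nn: "eta * eps * real t \<ge> 0" using eta_pos eps_pos by simp
    have "softmax F k (C t) \<in> U_M n F k astar M"
      unfolding U_M_def
    proof (intro CollectI exI conjI)
      show "softmax F k (C t) = softmax F k (C t)" by simp
      show "\<forall>i<n. \<forall>a\<in>actions F k. a \<noteq> astar i \<longrightarrow> (\<Sum>f\<in>a. C t i f) - (\<Sum>f\<in>astar i. C t i f) \<le> - M"
        using Suc nn unfolding A_def by fastforce
    qed
    then have wU: "softmax F k (C t) \<in> Ueps" using UM_sub by blast
    show ?case
    proof (intro allI impI ballI)
      fix i a assume i: "i < n" and a: "a \<in> A" "a \<noteq> astar i"
      have g: "dev_reward n F k R i (astar i) (softmax F k (C t)) - dev_reward n F k R i a (softmax F k (C t)) \<ge> eps"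
        using Ueps_gap wU i a unfolding A_def by blast
      then have g2: "eta * (dev_reward n F k R i a (softmax F k (C t)) - dev_reward n F k R i (astar i) (softmax F k (C t))) \<le> eta * (- eps)"
        using eta_pos by (intro mult_left_mono) auto
      have ih: "(\<Sum>f\<in>a. C t i f) - (\<Sum>f\<in>astar i. C t i f) \<le> - M - eta * eps * real t"
        using Suc i a by blast
      show "(\<Sum>f\<in>a. C (Suc t) i f) - (\<Sum>f\<in>astar i. C (Suc t) i f) \<le> - M - eta * eps * real (Suc t)"
        using ih g2 unfolding sumC[OF i] by (simp add: algebra_simps)
    qed
  qed
  show ?thesis
  proof (intro allI impI)
    fix i t assume i: "i < n"
    have "(\<Sum>a\<in>actions F k. \<bar>softmax F k (C t) i a - (if a = astar i then 1 else 0)\<bar>)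
           \<le> 2 * real k * real (card F) * exp (- M - eta * eps * real t)"
      using sm_bound[OF finF, of "astar i" k "C t" i] astarA[OF i] inv[of t] i unfolding A_def by blast
    then show "(\<Sum>a\<in>actions F k. \<bar>congestexp n F k R eta y0 t i a - point_mass astar i a\<bar>)
             \<le> 2 * real k * real (card F) * exp (- M - eta * eps * real t)"
      unfolding congestexp_def point_mass_def C_def by simp
  qed
qed

end
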